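(* Let $(\alpha,\beta)\in Q$ and let $x^*=\lim_kx_k$ for the GAFS sequence. Define $G(k)=\sum_{j=k}^\infty\gamma_j$. There exists $\bar N>0$ such that for all $k\ge0$, $$\frac{G(k)}{c^Tx_k-c^Tx^*}\le\bar N.$$
   Context: Let $A\in\mathbb{R}^{m\times n}$ have rank $m$, $b\in\mathbb{R}^m$, $c\in\mathbb{R}^n$. Primal LP: $\min c^Tx$ s.t. $Ax=b$, $x\ge 0$. Standing assumptions: the primal has a strictly positive feasible point; $c^Tx$ is not constant on the primal feasible region; the LP has an optimal solution. For $u\in\mathbb{R}^n$, $\gamma(u)=\max\{u_i: u_i>0\}$. For $x>0$, $X=\mathrm{diag}(x)$. GAFS sequence: fix $\alpha\in(0,1)$, $\beta\in[0,1)$, and $x_0>0$ with $Ax_0=b$. For $k\ge0$ let $X_k=\mathrm{diag}(x_k)$, $y_k=(AX_k^2A^T)^{-1}AX_k^2c$, $s_k=c-A^Ty_k$. Set $x_1=x_0-\alpha\frac{X_0^2s_0}{\gamma(X_0s_0)}$ and, for $k\ge1$, $x_{k+1}=x_k-\alpha\frac{X_k^2s_k}{\gamma(X_ks_k)}+\beta\frac{x_k-x_{k-1}}{\|X_k^{-1}(x_k-x_{k-1})\|_\infty}$ (all quantities assumed well defined). Write $\beta_k=\beta/\|X_k^{-1}(x_k-x_{k-1})\|_\infty$ ($k\ge1$), $\gamma_0=1$, $\gamma_k=\prod_{j=1}^k\beta_j$. $Q=\{(\alpha,\beta): 0<\alpha<1,\ 0\le\beta<1/\phi,\ \alpha+\beta\le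 2/3\}$ with $\phi=(1+\sqrt5)/2$. *)

theory Defs
  imports "HOL-Analysis.Analysis"
begin

definition lp_feasible :: "real^'n^'m \<Rightarrow> real^'m \<Rightarrow> real^'n \<Rightarrow> bool" where
  "lp_feasible A b x \<longleftrightarrow> A *v x = b \<and> (\<forall>i. x $ i \<ge> 0)"

definition pos_max :: "real^'n \<Rightarrow> real" where
  "pos_max u = Max {u $ i | i. u $ i > 0}"

definition diagm :: "real^'n \<Rightarrow> real^'n^'n" where
  "diagm x = (\<chi> i j. if i = j then x $ i else 0)"

definition gafs_y :: "real^'n^'m \<Rightarrow> real^'n \<Rightarrow> real^'n \<Rightarrow> real^'m" where
  "gafs_y A c x = matrix_inv (A ** diagm x ** diagm x ** transpose A)
                    *v ((A ** diagm x ** diagm x) *v c)"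

definition gafs_s :: "real^'n^'m \<Rightarrow> real^'n \<Rightarrow> real^'n \<Rightarrow> real^'n" where
  "gafs_s A c x = c - transpose A *v gafs_y A c x"

definition gafs_dir :: "real^'n^'m \<Rightarrow> real^'n \<Rightarrow> real^'n \<Rightarrow> real^'n" where
  "gafs_dir A c x = (1 / pos_max (diagm x *v gafs_s A c x)) *\<^sub>R
                      (diagm x ** diagm x *v gafs_s A c x)"

definition scaled :: "real^'n \<Rightarrow> real^'n \<Rightarrow> real^'n" where
  "scaled x v = (\<chi> i. v $ i / x $ i)"

definition gafs_betak :: "real \<Rightarrow> (nat \<Rightarrow> real^'n) \<Rightarrow> nat \<Rightarrow> real" where
  "gafs_betak \<beta> x k = \<beta> / infnorm (scaled (x k) (x k - x (k - 1)))"

definition gafs_gammak :: "real \<Rightarrow> (nat \<Rightarrow> real^'n) \<Rightarrow> nat \<Rightarrow> real" where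
  "gafs_gammak \<beta> x k = (\<Prod>j\<in>{1..k}. gafs_betak \<beta> x j)"

definition is_gafs :: "real^'n^'m \<Rightarrow> real^'n \<Rightarrow> real \<Rightarrow> real \<Rightarrow> (nat \<Rightarrow> real^'n) \<Rightarrow> bool" where
  "is_gafs A c \<alpha> \<beta> x \<longleftrightarrow>
     x 1 = x 0 - \<alpha> *\<^sub>R gafs_dir A c (x 0) \<and>
     (\<forall>k\<ge>1. x (Suc k) = x k - \<alpha> *\<^sub>R gafs_dir A c (x k)
                 + (\<beta> / infnorm (scaled (x k) (x k - x (k - 1)))) *\<^sub>R (x k - x (k - 1)))"

definition paramQ :: "(real \<times> real) set" where
  "paramQ = {(\<alpha>, \<beta>). 0 < \<alpha> \<and> \<alpha> < 1 \<and> 0 \<le> \<beta> \<and> \<beta> < 1 / ((1 + sqrt 5) / 2) \<and> \<alpha> + \<beta> \<le> 2/3}"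

end

theory Submission imports Defs begin

lemma diagm_mv: "diagm x *v u = (\<chi> i. x$i * u$i)"
proof -
  have "\<And>i j. (if i = j then x$i else 0) * u$j = (if i = j then x$i * u$i else 0)"
    by auto
  then show ?thesis by (simp add: diagm_def matrix_vector_mult_def vec_eq_iff)
qed

lemma inner_mv: "(v::real^'m) \<bullet> ((A::real^'n^'m) *v z) = (transpose A *v v) \<bullet> z"
  by (simp add: dot_lmul_matrix)

lemma diag_inner: "(w::real^'n) \<bullet> (diagm x *v (diagm x *v w)) = (\<Sum>i\<in>UNIV. (x$i * w$i)^2)"
  by (simp add: diagm_mv inner_vec_def power2_eq_square algebra_simps)

lemma M_inj:
  fixes A :: "real^'n^'m" and x :: "real^'n"
  assumes rk: "rank A = CARD('m)" and pos: "\<forall>i. x$i > 0"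
  shows "invertible (A ** diagm x ** diagm x ** transpose A)"
proof -
  let ?M = "A ** diagm x ** diagm x ** transpose A"
  have injT: "inj ((*v) (transpose A))"
    using rk by (simp add: full_rank_injective[symmetric] rank_transpose del: transpose_matrix_vector)
  have "\<forall>v. ?M *v v = 0 \<longrightarrow> v = 0"
  proof (intro allI impI)
    fix v assume h: "?M *v v = 0"
    define w where "w = transpose A *v v"
    have "v \<bullet> (?M *v v) = w \<bullet> (diagm x *v (diagm x *v w))"
    proof -
      have "?M *v v = A *v (diagm x *v (diagm x *v w))"
        unfolding w_def by (simp add: matrix_vector_mul_assoc matrix_mul_assoc del: transpose_matrix_vector)
      then show ?thesis unfolding w_def by (simp only: inner_mv)
    qed
    then have "(\<Sum>i\<in>UNIV. (x$i * w$i)^2) = 0" using h diag_inner[of w x] by simp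
    then have "\<forall>i\<in>UNIV. (x$i * w$i)^2 = 0"
      by (subst sum_nonneg_eq_0_iff[symmetric]) auto
    then have "w = 0" using pos by (simp add: vec_eq_iff) (metis less_irrefl)
    then show "v = 0" using injT unfolding w_def
      by (metis inj_eq matrix_vector_mult_0_right)
  qed
  then obtain B where "B ** ?M = mat 1"
    using matrix_left_invertible_ker by blast
  then show ?thesis using invertible_left_inverse by blast
qed

lemma inv_right: "invertible M \<Longrightarrow> M ** matrix_inv M = mat 1"
  unfolding invertible_def matrix_inv_def by (rule someI2_ex) auto

lemma c_dir:
  fixes A :: "real^'n^'m" and x :: "real^'n"
  assumes rk: "rank A = CARD('m)" and pos: "\<forall>i. x$i > 0"
  shows "c \<bullet> (diagm x ** diagm x *v gafs_s A c x) = (\<Sum>i\<in>UNIV. ((diagm x *v gafs_s A c x)$i)^2)"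
proof -
  let ?M = "A ** diagm x ** diagm x ** transpose A"
  define y where "y = gafs_y A c x"
  define s where "s = gafs_s A c x"
  define w where "w = (A ** diagm x ** diagm x) *v c"
  have y: "y = matrix_inv ?M *v w" unfolding y_def w_def gafs_y_def ..
  have My: "?M *v y = w" unfolding y matrix_vector_mul_assoc
    using inv_right[OF M_inj[OF rk pos]] by simp
  have sdef: "s = c - transpose A *v y" unfolding s_def gafs_s_def y_def ..
  have Az: "A *v (diagm x *v (diagm x *v s)) = 0"
  proof -
    have "A *v (diagm x *v (diagm x *v s)) = (A ** diagm x ** diagm x) *v s"
      by (simp add: matrix_vector_mul_assoc matrix_mul_assoc del: transpose_matrix_vector)
    also have "\<dots> = w - ?M *v y"
      unfolding sdef w_def by (simp add: matrix_vector_mult_diff_distrib matrix_vector_mul_assoc del: transpose_matrix_vector)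
    finally show ?thesis using My by simp
  qed
  have cs: "c = s + transpose A *v y" using sdef by simp
  have "c \<bullet> (diagm x ** diagm x *v s) = s \<bullet> (diagm x *v (diagm x *v s)) + (transpose A *v y) \<bullet> (diagm x *v (diagm x *v s))"
    by (subst cs) (simp add: inner_add_left matrix_vector_mul_assoc del: transpose_matrix_vector)
  also have "(transpose A *v y) \<bullet> (diagm x *v (diagm x *v s)) = 0"
    using inner_mv[of y A "diagm x *v (diagm x *v s)"] Az by simp
  finally show ?thesis unfolding s_def[symmetric] diag_inner by (simp add: diagm_mv)
qed

lemma pos_max_pos:
  assumes "\<exists>i. (u::real^'n) $ i > 0"
  shows "pos_max u > 0"
proof -
  have seteq: "{u $ i | i. u $ i > 0} = (\<lambda>i. u $ i) ` {i. u $ i > 0}" by (simp add: setcompr_eq_image)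
  have fin: "finite {u $ i | i. u $ i > 0}" unfolding seteq by simp
  obtain i where i: "u $ i > 0" using assms by blast
  have mem: "u $ i \<in> {u $ i | i. u $ i > 0}" unfolding seteq using i by simp
  have "u $ i \<le> pos_max u" unfolding pos_max_def by (rule Max_ge[OF fin mem])
  then show ?thesis using i by simp
qed

lemma c_dir_nonneg:
  fixes A :: "real^'n^'m" and x :: "real^'n"
  assumes rk: "rank A = CARD('m)" and pos: "\<forall>i. x$i > 0"
    and g: "\<exists>i. (diagm x *v gafs_s A c x) $ i > 0"
  shows "c \<bullet> gafs_dir A c x \<ge> 0" and "c \<bullet> gafs_dir A c x > 0"
proof -
  have pm: "pos_max (diagm x *v gafs_s A c x) > 0" using pos_max_pos[OF g] .
  obtain i where i: "(diagm x *v gafs_s A c x) $ i > 0" using g by blast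
  have "(\<Sum>j\<in>UNIV. ((diagm x *v gafs_s A c x)$j)^2) \<ge> ((diagm x *v gafs_s A c x)$i)^2"
    by (rule member_le_sum) auto
  moreover have "((diagm x *v gafs_s A c x)$i)^2 > 0" using i by simp
  ultimately have sp: "(\<Sum>j\<in>UNIV. ((diagm x *v gafs_s A c x)$j)^2) > 0" by linarith
  have eq: "c \<bullet> gafs_dir A c x = (1 / pos_max (diagm x *v gafs_s A c x)) * (\<Sum>j\<in>UNIV. ((diagm x *v gafs_s A c x)$j)^2)"
    unfolding gafs_dir_def inner_scaleR_right c_dir[OF rk pos] ..
  show "c \<bullet> gafs_dir A c x > 0" unfolding eq by (intro mult_pos_pos) (simp_all add: pm sp)
  then show "c \<bullet> gafs_dir A c x \<ge> 0" by simp
qed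

theorem lemma8:
  fixes A :: "real^'n^'m" and b :: "real^'m" and c :: "real^'n"
    and \<alpha> \<beta> :: real and x :: "nat \<Rightarrow> real^'n" and xstar :: "real^'n"
  assumes rankA: "rank A = CARD('m)"
    and strictly_feasible: "\<exists>z. lp_feasible A b z \<and> (\<forall>i. z $ i > 0)"
    and nonconstant: "\<exists>z w. lp_feasible A b z \<and> lp_feasible A b w \<and> c \<bullet> z \<noteq> c \<bullet> w"
    and optimal: "\<exists>z. lp_feasible A b z \<and> (\<forall>w. lp_feasible A b w \<longrightarrow> c \<bullet> z \<le> c \<bullet> w)"
    and Q: "(\<alpha>, \<beta>) \<in> paramQ"
    and x0: "A *v x 0 = b"
    and gafs: "is_gafs A c \<alpha> \<beta> x"
    and wd_pos: "\<forall>k i. x k $ i > 0"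
    and wd_gamma: "\<forall>k. \<exists>i. (diagm (x k) *v gafs_s A c (x k)) $ i > 0"
    and wd_step: "\<forall>k\<ge>1. x k \<noteq> x (k - 1)"
    and lim: "x \<longlonglongrightarrow> xstar"
  shows "summable (gafs_gammak \<beta> x) \<and>
         (\<exists>N > 0. \<forall>k. (\<Sum>j. gafs_gammak \<beta> x (j + k)) / (c \<bullet> x k - c \<bullet> xstar) \<le> N)"
proof -
  have alpha: "\<alpha> > 0" and beta: "\<beta> \<ge> 0" using Q by (auto simp: paramQ_def)
  define d where "d k = c \<bullet> x k" for k
  define e where "e k = d k - d (Suc k)" for k
  define q where "q k = c \<bullet> gafs_dir A c (x k)" for k
  define g where "g = gafs_gammak \<beta> x"
  define bk where "bk = gafs_betak \<beta> x"
  have q0: "\<And>k. q k \<ge> 0" and qpos: "\<And>k. q k > 0"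
    unfolding q_def using c_dir_nonneg[OF rankA] wd_pos wd_gamma by auto
  have bk0: "\<And>k. bk k \<ge> 0" unfolding bk_def gafs_betak_def by (rule divide_nonneg_nonneg[OF beta infnorm_pos_le])
  have e0: "e 0 = \<alpha> * q 0"
  proof -
    have "x (Suc 0) = x 0 - \<alpha> *\<^sub>R gafs_dir A c (x 0)"
      using gafs unfolding is_gafs_def by simp
    then have "d (Suc 0) = d 0 - \<alpha> * q 0" unfolding d_def q_def by (simp add: inner_diff_right)
    then show ?thesis unfolding e_def by simp
  qed
  have eS: "e (Suc k) = \<alpha> * q (Suc k) + bk (Suc k) * e k" for k
  proof -
    have "x (Suc (Suc k)) = x (Suc k) - \<alpha> *\<^sub>R gafs_dir A c (x (Suc k))
                 + bk (Suc k) *\<^sub>R (x (Suc k) - x k)"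
    proof -
      have all: "\<forall>k\<ge>1. x (Suc k) = x k - \<alpha> *\<^sub>R gafs_dir A c (x k)
                 + (\<beta> / infnorm (scaled (x k) (x k - x (k - 1)))) *\<^sub>R (x k - x (k - 1))"
        using gafs unfolding is_gafs_def by blast
      have "Suc k \<ge> 1" by simp
      with all have "x (Suc (Suc k)) = x (Suc k) - \<alpha> *\<^sub>R gafs_dir A c (x (Suc k))
                 + (\<beta> / infnorm (scaled (x (Suc k)) (x (Suc k) - x (Suc k - 1)))) *\<^sub>R (x (Suc k) - x (Suc k - 1))"
        by blast
      then show ?thesis unfolding bk_def gafs_betak_def diff_Suc_1 .
    qed
    then have "d (Suc (Suc k)) = d (Suc k) - \<alpha> * q (Suc k) + bk (Suc k) * (d (Suc k) - d k)"
      unfolding d_def q_def by (simp add: inner_diff_right inner_add_right)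
    then show ?thesis unfolding e_def by (simp add: algebra_simps)
  qed
  have g0: "g 0 = 1" unfolding g_def gafs_gammak_def by simp
  have gS: "g (Suc k) = g k * bk (Suc k)" for k
    unfolding g_def gafs_gammak_def bk_def by (simp add: prod.nat_ivl_Suc' mult.commute)
  have gnn: "g k \<ge> 0" for k by (induction k) (auto simp: g0 gS bk0)
  define a0 where "a0 = e 0"
  have a0: "a0 > 0" unfolding a0_def e0 using alpha qpos by simp
  have ebound: "e k \<ge> a0 * g k" for k
  proof (induction k)
    case 0 then show ?case by (simp add: a0_def g0)
  next
    case (Suc k)
    have "a0 * g (Suc k) = bk (Suc k) * (a0 * g k)" by (simp add: gS)
    also have "\<dots> \<le> bk (Suc k) * e k" using Suc bk0 by (simp add: mult_left_mono)
    also have "\<dots> \<le> e (Suc k)" using eS[of k] alpha q0[of "Suc k"] by simp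
    finally show ?case .
  qed
  have enn: "e k \<ge> 0" for k using ebound[of k] a0 gnn[of k] by (smt (verit) mult_nonneg_nonneg)
  have tele: "d k - d (k + n) = (\<Sum>j<n. e (j + k))" for k n
    by (induction n) (auto simp: e_def add.commute)
  have dlim: "(\<lambda>n. d (k + n)) \<longlonglongrightarrow> c \<bullet> xstar" for k
  proof -
    have "(\<lambda>n. x (n + k)) \<longlonglongrightarrow> xstar" using LIMSEQ_ignore_initial_segment[OF lim] .
    then have "(\<lambda>n. c \<bullet> x (n + k)) \<longlonglongrightarrow> c \<bullet> xstar" by (intro tendsto_intros)
    then show ?thesis unfolding d_def by (simp add: add.commute)
  qed
  have psum: "(\<Sum>j<n. g (j + k)) \<le> (d k - c \<bullet> xstar) / a0" for k n
  proof -
    have "(\<Sum>j<n. g (j + k)) \<le> (d k - d (k + m)) / a0" if "m \<ge> n" for m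
    proof -
      have "(\<Sum>j<n. g (j + k)) \<le> (\<Sum>j<m. g (j + k))"
        using that gnn by (intro sum_mono2) auto
      also have "\<dots> \<le> (\<Sum>j<m. e (j + k)) / a0"
      proof -
        have "a0 * (\<Sum>j<m. g (j + k)) = (\<Sum>j<m. a0 * g (j + k))" by (rule sum_distrib_left)
        also have "\<dots> \<le> (\<Sum>j<m. e (j + k))" by (rule sum_mono) (rule ebound)
        finally have "(\<Sum>j<m. g (j + k)) * a0 \<le> (\<Sum>j<m. e (j + k))" by (simp only: mult.commute)
        then show ?thesis using a0 by (simp only: pos_le_divide_eq)
      qed
      finally show ?thesis using tele by simp
    qed
    moreover have "(\<lambda>m. (d k - d (k + m)) / a0) \<longlonglongrightarrow> (d k - c \<bullet> xstar) / a0"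
      by (intro tendsto_intros dlim) (use a0 in simp)
    ultimately show ?thesis by (intro LIMSEQ_le_const[of "\<lambda>m. (d k - d (k + m)) / a0"]) auto
  qed
  have summ: "summable (\<lambda>j. g (j + k))" for k
    by (rule summableI_nonneg_bounded[OF _ psum]) (use gnn in auto)
  have Gle: "(\<Sum>j. g (j + k)) \<le> (d k - c \<bullet> xstar) / a0" for k
    by (rule suminf_le_const[OF summ psum])
  have Gnn: "(\<Sum>j. g (j + k)) \<ge> 0" for k by (rule suminf_nonneg[OF summ]) (use gnn in auto)
  have sg: "summable g" using summ[of 0] by simp
  have bnd: "\<forall>k. (\<Sum>j. g (j + k)) / (c \<bullet> x k - c \<bullet> xstar) \<le> 1 / a0"
  proof
    fix k
    show "(\<Sum>j. g (j + k)) / (c \<bullet> x k - c \<bullet> xstar) \<le> 1 / a0"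
    proof (cases "c \<bullet> x k - c \<bullet> xstar > 0")
      case True
      have "(\<Sum>j. g (j + k)) / (c \<bullet> x k - c \<bullet> xstar) \<le> ((c \<bullet> x k - c \<bullet> xstar) / a0) / (c \<bullet> x k - c \<bullet> xstar)"
        using Gle[of k] True unfolding d_def by (intro divide_right_mono) simp_all
      also have "\<dots> = 1 / a0" using True by simp
      finally show ?thesis .
    next
      case False
      then have "(\<Sum>j. g (j + k)) / (c \<bullet> x k - c \<bullet> xstar) \<le> 0"
        using Gnn[of k] by (simp add: divide_nonneg_nonpos)
      moreover have "1 / a0 > 0" using a0 by simp
      ultimately show ?thesis by linarith
    qed
  qed
  have "summable g \<and> (\<exists>N > 0. \<forall>k. (\<Sum>j. g (j + k)) / (c \<bullet> x k - c \<bullet> xstar) \<le> N)"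
  proof (intro conjI)
    show "\<exists>N > 0. \<forall>k. (\<Sum>j. g (j + k)) / (c \<bullet> x k - c \<bullet> xstar) \<le> N"
      using a0 bnd by (intro exI[of _ "1/a0"] conjI) simp_all
  qed (rule sg)
  then show ?thesis unfolding g_def .
qed

end
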